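(* Let $m\ge 3$ and let $K\subset\mathbb{R}^m$ be a self-dual, smooth, strictly convex cone. Then there is no proper cone $L\subset\mathbb{R}^m$ such that $K$ is an $L$-isotone projection set.
   Context: $\mathbb{R}^m$ carries the standard inner product. A proper cone is a closed convex cone $K$ that is pointed ($K\cap(-K)=\{0\}$) and generating ($K-K=\mathbb{R}^m$). The dual cone is $K^*=\{y:\langle x,y\rangle\ge0\ \forall x\in K\}$; $K$ is self-dual if $K=K^*$. For $u\neq 0$, $H(u,0)=\{x:\langle u,x\rangle=0\}$ and $H_-(u,0)=\{x:\langle u,x\rangle\le0\}$; $H(u,0)$ is a supporting hyperplane of $K$ if $K\subset H_-(u,0)$. A proper cone $K$ is strictly convex if $\dim(K\cap H(u,0))\le1$ for every supporting hyperplane $H(u,0)$ of $K$; a strictly convex proper cone is smooth if through each boundary point $x\neq0$ of $K$ there is exactly one supporting hyperplane. For a cone $L$, $x\le_L y$ means $y-x\in L$; $P_K$ is the metric projection onto $K$, and $K$ is an $L$-isotone projection set if $x\le_L y$ implies $P_Kx\le_L P_Ky$. *)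

theory Defs
  imports "HOL-Analysis.Analysis"
begin

definition proper_cone :: "'a::euclidean_space set \<Rightarrow> bool" where
  "proper_cone K \<longleftrightarrow> closed K \<and> convex_cone K \<and>
     K \<inter> uminus ` K = {0} \<and> {x - y | x y. x \<in> K \<and> y \<in> K} = UNIV"

definition dual_cone :: "'a::euclidean_space set \<Rightarrow> 'a set" where
  "dual_cone K = {y. \<forall>x\<in>K. inner x y \<ge> 0}"

definition self_dual :: "'a::euclidean_space set \<Rightarrow> bool" where
  "self_dual K \<longleftrightarrow> K = dual_cone K"

definition supporting_hyperplane :: "'a::euclidean_space set \<Rightarrow> 'a \<Rightarrow> bool" where
  "supporting_hyperplane K u \<longleftrightarrow> u \<noteq> 0 \<and> K \<subseteq> {x. inner u x \<le> 0}"

definition strictly_convex_cone :: "'a::euclidean_space set \<Rightarrow> bool" where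
  "strictly_convex_cone K \<longleftrightarrow> proper_cone K \<and>
     (\<forall>u. supporting_hyperplane K u \<longrightarrow> aff_dim (K \<inter> {x. inner u x = 0}) \<le> 1)"

text \<open>through each boundary point x \<noteq> 0 there is exactly one supporting hyperplane
  (hyperplanes counted as sets)\<close>
definition smooth_cone :: "'a::euclidean_space set \<Rightarrow> bool" where
  "smooth_cone K \<longleftrightarrow> strictly_convex_cone K \<and>
     (\<forall>x\<in>frontier K. x \<noteq> 0 \<longrightarrow>
        (\<exists>!H. \<exists>u. supporting_hyperplane K u \<and> H = {z. inner u z = 0} \<and> x \<in> H))"

definition isotone_projection_set :: "'a::euclidean_space set \<Rightarrow> 'a set \<Rightarrow> bool" where
  "isotone_projection_set L K \<longleftrightarrow>
     (\<forall>x y. y - x \<in> L \<longrightarrow> closest_point K y - closest_point K x \<in> L)"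

end

theory Submission
  imports Defs
begin


lemma pc_facts:
  assumes "proper_cone K"
  shows "closed K" "convex K" "conic K" "0 \<in> K"
    "\<And>x. x \<in> K \<Longrightarrow> -x \<in> K \<Longrightarrow> x = 0"
    "\<And>y. \<exists>a b. a \<in> K \<and> b \<in> K \<and> y = a - b"
proof -
  have c: "closed K" "convex_cone K" "K \<inter> uminus ` K = {0}"
    "{x - y | x y. x \<in> K \<and> y \<in> K} = UNIV"
    using assms unfolding proper_cone_def by auto
  show "closed K" by (fact c(1))
  show "convex K" "conic K" using c(2) unfolding convex_cone_def by auto
  show "0 \<in> K" using c(3) by auto
  show "\<And>x. x \<in> K \<Longrightarrow> -x \<in> K \<Longrightarrow> x = 0"
  proof -
    fix x assume "x \<in> K" "-x \<in> K"
    then have "x \<in> uminus ` K" by (metis image_eqI minus_minus)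
    with \<open>x \<in> K\<close> c(3) show "x = 0" by auto
  qed
  show "\<And>y. \<exists>a b. a \<in> K \<and> b \<in> K \<and> y = a - b"
  proof -
    fix y :: 'a
    have "y \<in> {x - y | x y. x \<in> K \<and> y \<in> K}" using c(4) by auto
    then show "\<exists>a b. a \<in> K \<and> b \<in> K \<and> y = a - b" by auto
  qed
qed

lemma sd_mem:
  assumes "self_dual K"
  shows "k \<in> K \<longleftrightarrow> (\<forall>y\<in>K. inner y k \<ge> 0)"
  using assms unfolding self_dual_def dual_cone_def by blast

lemma conic_scale: "conic K \<Longrightarrow> x \<in> K \<Longrightarrow> 0 \<le> c \<Longrightarrow> c *\<^sub>R x \<in> K"
  by (rule conicD)

lemma sq_exp: "inner (a - s *\<^sub>R p) (a - s *\<^sub>R p) = inner a a - 2 * s * inner p a + s * s * inner p (p::'a::real_inner)"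
proof -
  have "inner a p = inner p a" by (rule inner_commute)
  then show ?thesis by (simp add: inner_diff_left inner_diff_right algebra_simps)
qed
lemma sq_exp2: "inner (x - s *\<^sub>R p - z) (x - s *\<^sub>R p - z) = inner (x - z) (x - z) + s * s * inner p p - 2 * s * inner p x + 2 * s * inner p (z::'a::real_inner)"
proof -
  have e: "x - s *\<^sub>R p - z = (x - z) - s *\<^sub>R p" by simp
  have "inner (x - s *\<^sub>R p - z) (x - s *\<^sub>R p - z) = inner (x - z) (x - z) - 2 * s * inner p (x - z) + s * s * inner p p"
    unfolding e by (rule sq_exp)
  also have "inner p (x - z) = inner p x - inner p z" by (rule inner_diff_right)
  finally show ?thesis by (simp add: algebra_simps)
qed

lemma proj_fix:
  fixes K :: "'a::euclidean_space set"
  assumes pc: "proper_cone K" and sd: "self_dual K" and x: "x \<in> K" and p: "p \<in> K"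
    and px: "inner p x = 0" and s: "0 \<le> s"
  shows "closest_point K (x - s *\<^sub>R p) = x"
proof -
  have "x = closest_point K (x - s *\<^sub>R p)"
  proof (rule closest_point_unique)
    show "convex K" "closed K" using pc_facts(2,1)[OF pc] by auto
    show "x \<in> K" by fact
    show "\<forall>z\<in>K. dist (x - s *\<^sub>R p) x \<le> dist (x - s *\<^sub>R p) z"
    proof
      fix z assume z: "z \<in> K"
      have pz: "inner z p \<ge> 0" using sd_mem[OF sd, THEN iffD1, OF p] z by blast
      have "inner (x - s *\<^sub>R p - x) (x - s *\<^sub>R p - x) \<le> inner (x - s *\<^sub>R p - z) (x - s *\<^sub>R p - z)"
      proof -
        have "inner (x - s *\<^sub>R p - z) (x - s *\<^sub>R p - z) = inner (x - z) (x - z) + s * s * inner p p - 2 * s * inner p x + 2 * s * inner p z"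
          by (rule sq_exp2)
        moreover have "inner (x - s *\<^sub>R p - x) (x - s *\<^sub>R p - x) = s * s * inner p p" by simp
        moreover have "inner (x - z) (x - z) \<ge> 0" by simp
        moreover have "2 * s * inner p z \<ge> 0" using s pz by (simp add: inner_commute)
        moreover have "2 * s * inner p x = 0" using px by simp
        ultimately show ?thesis by linarith
      qed
      then show "dist (x - s *\<^sub>R p) x \<le> dist (x - s *\<^sub>R p) z"
        unfolding dist_norm norm_le by simp
    qed
  qed
  then show ?thesis by (rule sym)
qed



lemma seg_in:
  assumes "convex K" "x \<in> K" "x + t *\<^sub>R z \<in> K" "0 < s" "s \<le> (t::real)"
  shows "x + s *\<^sub>R z \<in> K"
proof -
  have "(1 - s/t) *\<^sub>R x + (s/t) *\<^sub>R (x + t *\<^sub>R z) \<in> K"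
    using assms by (intro convexD) (auto simp: field_simps)
  moreover have "(1 - s/t) *\<^sub>R x + (s/t) *\<^sub>R (x + t *\<^sub>R z) = x + s *\<^sub>R z"
    using assms by (simp add: algebra_simps)
  ultimately show ?thesis by simp
qed

lemma tangency:
  fixes K :: "'a::euclidean_space set"
  assumes pc: "proper_cone K" and sm: "smooth_cone K"
    and xf: "x \<in> frontier K" and x0: "x \<noteq> 0"
    and su: "supporting_hyperplane K u0" and ux: "inner u0 x = 0" and ud: "inner u0 d = 0"
  shows "d \<in> closure {z. \<exists>t>0. x + t *\<^sub>R z \<in> K}"
proof (rule ccontr)
  define T where "T = {z. \<exists>t>0. x + t *\<^sub>R z \<in> K}"
  assume "d \<notin> closure {z. \<exists>t>0. x + t *\<^sub>R z \<in> K}"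
  then have dn: "d \<notin> closure T" unfolding T_def .
  have cK: "closed K" "convex K" "conic K" "0 \<in> K" using pc_facts(1-4)[OF pc] by auto
  have xK: "x \<in> K" using xf cK(1) frontier_subset_closed by blast
  have convT: "convex T"
  proof (rule convexI)
    fix z1 z2 and a b :: real
    assume z1: "z1 \<in> T" and z2: "z2 \<in> T" and ab: "0 \<le> a" "0 \<le> b" "a + b = 1"
    obtain t1 where t1: "t1 > 0" "x + t1 *\<^sub>R z1 \<in> K" using z1 unfolding T_def by auto
    obtain t2 where t2: "t2 > 0" "x + t2 *\<^sub>R z2 \<in> K" using z2 unfolding T_def by auto
    define t where "t = min t1 t2"
    have tp: "t > 0" using t1 t2 unfolding t_def by auto
    have k1: "x + t *\<^sub>R z1 \<in> K" using seg_in[OF cK(2) xK t1(2) tp] unfolding t_def by auto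
    have k2: "x + t *\<^sub>R z2 \<in> K" using seg_in[OF cK(2) xK t2(2) tp] unfolding t_def by auto
    have "a *\<^sub>R (x + t *\<^sub>R z1) + b *\<^sub>R (x + t *\<^sub>R z2) \<in> K"
      using convexD[OF cK(2) k1 k2 ab] .
    moreover have "a *\<^sub>R (x + t *\<^sub>R z1) + b *\<^sub>R (x + t *\<^sub>R z2) = x + t *\<^sub>R (a *\<^sub>R z1 + b *\<^sub>R z2)"
    proof -
      have "a *\<^sub>R (x + t *\<^sub>R z1) + b *\<^sub>R (x + t *\<^sub>R z2) = (a + b) *\<^sub>R x + t *\<^sub>R (a *\<^sub>R z1 + b *\<^sub>R z2)"
        by (simp add: algebra_simps)
      then show ?thesis using ab by simp
    qed
    ultimately show "a *\<^sub>R z1 + b *\<^sub>R z2 \<in> T" using tp unfolding T_def by auto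
  qed
  obtain a b where ab: "inner a d < b" "\<forall>y\<in>closure T. inner a y > b"
    using separating_hyperplane_closed_point[OF convex_closure[OF convT] closed_closure dn] by blast
  have aT: "\<And>z. z \<in> T \<Longrightarrow> inner a z > b" using ab(2) closure_subset by blast
  have "0 \<in> T" unfolding T_def using xK by (auto intro: exI[of _ 1])
  then have b0: "b < 0" using aT by fastforce
  have aT0: "inner a z \<ge> 0" if z: "z \<in> T" for z
  proof (rule ccontr)
    assume "\<not> inner a z \<ge> 0"
    then have neg: "inner a z < 0" by simp
    define lam where "lam = b / inner a z"
    have lp: "lam > 0" using neg b0 unfolding lam_def by (simp add: divide_neg_neg)
    obtain t where t: "t > 0" "x + t *\<^sub>R z \<in> K" using z unfolding T_def by auto
    have "x + (t/lam) *\<^sub>R (lam *\<^sub>R z) \<in> K" using t lp by simp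
    then have "lam *\<^sub>R z \<in> T" unfolding T_def using t lp by (intro CollectI exI[of _ "t/lam"]) auto
    then have "inner a (lam *\<^sub>R z) > b" by (rule aT)
    moreover have "inner a (lam *\<^sub>R z) = b" using neg unfolding lam_def by simp
    ultimately show False by simp
  qed
  have "x \<in> T" unfolding T_def
  proof (intro CollectI exI[of _ 1] conjI)
    show "x + 1 *\<^sub>R x \<in> K" using conicD[OF cK(3) xK, of 2] by (simp add: scaleR_2)
  qed simp
  then have ax1: "inner a x \<ge> 0" by (rule aT0)
  have "-x \<in> T" unfolding T_def using cK(4) by (intro CollectI exI[of _ 1]) auto
  then have "inner a (-x) \<ge> 0" by (rule aT0)
  with ax1 have ax: "inner a x = 0" by simp
  have ak: "inner (-a) k \<le> 0" if k: "k \<in> K" for k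
  proof -
    have "k - x \<in> T" unfolding T_def using k by (intro CollectI exI[of _ 1]) auto
    then have "inner a (k - x) \<ge> 0" by (rule aT0)
    then show ?thesis using ax by (simp add: inner_diff_right)
  qed
  have a0: "-a \<noteq> 0" using ab(1) b0 by auto
  have s1: "supporting_hyperplane K (-a)" unfolding supporting_hyperplane_def using a0 ak by auto
  have xnz: "x \<noteq> 0" by fact
  have uniq: "\<exists>!H. \<exists>u. supporting_hyperplane K u \<and> H = {z. inner u z = 0} \<and> x \<in> H"
    using sm xf x0 unfolding smooth_cone_def by blast
  have H1: "\<exists>u. supporting_hyperplane K u \<and> {z. inner (-a) z = 0} = {z. inner u z = 0} \<and> x \<in> {z. inner (-a) z = 0}"
    using s1 ax by auto
  have H2: "\<exists>u. supporting_hyperplane K u \<and> {z. inner u0 z = 0} = {z. inner u z = 0} \<and> x \<in> {z. inner u0 z = 0}"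
    using su ux by auto
  have "{z. inner (-a) z = 0} = {z. inner u0 z = 0}" using uniq H1 H2 by blast
  then have "inner (-a) d = 0" using ud by blast
  then show False using ab(1) b0 by simp
qed



lemma sq_add: "inner (a + b) (a + b) = inner a a + 2 * inner a b + inner b (b::'a::real_inner)"
proof -
  have "inner b a = inner a b" by (rule inner_commute)
  then show ?thesis by (simp add: inner_add_left inner_add_right)
qed

lemma blowup:
  fixes K L :: "'a::euclidean_space set"
  assumes pc: "proper_cone K" and sd: "self_dual K" and sm: "smooth_cone K"
    and pL: "proper_cone L" and iso: "isotone_projection_set L K"
    and pf: "p \<in> frontier K" and p0: "p \<noteq> 0" and l: "l \<in> L"
  shows "l - (inner p l / inner p p) *\<^sub>R p \<in> L"
proof -
  have cK: "closed K" "convex K" "conic K" "0 \<in> K" using pc_facts(1-4)[OF pc] by auto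
  have cL: "closed L" "convex L" "conic L" "0 \<in> L" using pc_facts(1-4)[OF pL] by auto
  have pK: "p \<in> K" using pf cK(1) frontier_subset_closed by blast
  have pKd: "\<And>y. y \<in> K \<Longrightarrow> inner y p \<ge> 0" using sd_mem[OF sd, THEN iffD1, OF pK] by blast
  have "\<exists>!H. \<exists>u. supporting_hyperplane K u \<and> H = {z. inner u z = 0} \<and> p \<in> H"
    using sm pf p0 unfolding smooth_cone_def by blast
  then obtain u where su: "supporting_hyperplane K u" and up: "inner u p = 0"
    by (metis (mono_tags, lifting) ex1_implies_ex mem_Collect_eq)
  define x where "x = - u"
  have u0: "u \<noteq> 0" and uK: "\<And>k. k \<in> K \<Longrightarrow> inner u k \<le> 0"
    using su unfolding supporting_hyperplane_def by auto
  have xK: "x \<in> K"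
  proof -
    have "\<forall>y\<in>K. inner y x \<ge> 0"
      using uK unfolding x_def by (simp add: inner_commute)
    then show ?thesis using sd_mem[OF sd] by blast
  qed
  have x0: "x \<noteq> 0" using u0 unfolding x_def by simp
  have px: "inner p x = 0" using up unfolding x_def by (simp add: inner_commute)
  have pp: "inner p p > 0" using p0 by simp
  have np: "norm p > 0" using p0 by simp
  have xf: "x \<in> frontier K"
  proof -
    have "x \<notin> interior K"
    proof
      assume "x \<in> interior K"
      then obtain e where e: "e > 0" "ball x e \<subseteq> K" using mem_interior by blast
      define y where "y = x - (e/2/norm p) *\<^sub>R p"
      have "norm ((e/2/norm p) *\<^sub>R p) = e/2" using np e by simp
      then have "dist x y = e/2" unfolding y_def dist_norm by simp
      then have "y \<in> ball x e" using e(1) by simp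
      then have "y \<in> K" using e(2) by blast
      then have i1: "inner y p \<ge> 0" by (rule pKd)
      have i2: "inner y p = inner x p - (e/2/norm p) * inner p p"
        unfolding y_def by (simp add: inner_diff_left)
      have i3: "(e/2/norm p) * inner p p = (e/2) * norm p"
        using np by (simp add: power2_norm_eq_inner[symmetric] power2_eq_square)
      have i4: "inner x p = 0" using px by (simp add: inner_commute)
      have i5: "(e/2) * norm p > 0" using e np by simp
      show False using i1 i2 i3 i4 i5 by linarith
    qed
    then show ?thesis using xK closure_subset unfolding frontier_def by blast
  qed
  have sp: "supporting_hyperplane K (-p)"
    unfolding supporting_hyperplane_def using p0 pKd by (auto simp: inner_commute)
  define T where "T = {z. \<exists>t>0. x + t *\<^sub>R z \<in> K}"
  have tang: "\<And>d. inner p d = 0 \<Longrightarrow> d \<in> closure T"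
    unfolding T_def using tangency[OF pc sm xf x0 sp] px by simp
  define h where "h = l - (inner p l / inner p p) *\<^sub>R p"
  have ph: "inner p h = 0" unfolding h_def using pp by (simp add: inner_diff_right)
  have hT: "h \<in> closure T" using tang ph by blast
  define c where "c = max 0 (inner p l / inner p p)"
  define a where "a = c - inner p l / inner p p"
  have c0: "c \<ge> 0" and a0: "a \<ge> 0" unfolding a_def c_def by auto
  define y where "y = l - c *\<^sub>R p"
  have yh: "y - h = - (a *\<^sub>R p)" unfolding y_def h_def a_def by (simp add: algebra_simps)
  define M where "M = norm (y - h)"
  have M0: "M \<ge> 0" unfolding M_def by simp
  have "h \<in> closure L"
    unfolding closure_approachable
  proof (intro allI impI)
    fix \<epsilon> :: real assume ep: "\<epsilon> > 0"
    define \<delta> where "\<delta> = min 1 (\<epsilon>^2/(2*M+2))"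
    have d0: "\<delta> > 0" unfolding \<delta>_def using ep M0 by auto
    have d1: "\<delta> \<le> 1" "\<delta> \<le> \<epsilon>^2/(2*M+2)" unfolding \<delta>_def by auto
    have key: "2*M*\<delta> + \<delta>^2 < \<epsilon>^2"
    proof -
      have "\<delta>^2 \<le> \<delta>" using d0 d1 by (simp add: power2_eq_square mult_le_cancel_left1)
      then have "2*M*\<delta> + \<delta>^2 \<le> \<delta> * (2*M+1)" by (simp add: algebra_simps)
      also have "\<dots> < \<delta> * (2*M+2)" using d0 by simp
      also have "\<dots> \<le> \<epsilon>^2" using d1(2) M0 by (simp add: field_simps)
      finally show ?thesis .
    qed
    obtain w where w: "w \<in> T" "dist w h < \<delta>" using hT d0 unfolding closure_approachable by blast
    obtain t where t: "t > 0" "x + t *\<^sub>R w \<in> K" using w(1) unfolding T_def by auto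
    define q where "q = closest_point K (x + t *\<^sub>R y)"
    have qK: "q \<in> K" unfolding q_def using closest_point_in_set[OF cK(1)] cK(4) by blast
    define z where "z = (1/t) *\<^sub>R (q - x)"
    have zL: "z \<in> L"
    proof -
      have "(x + t *\<^sub>R y) - (x - (t*c) *\<^sub>R p) = t *\<^sub>R l"
        unfolding y_def by (simp add: algebra_simps)
      moreover have "t *\<^sub>R l \<in> L" using conicD[OF cL(3) l] t by simp
      ultimately have "closest_point K (x + t *\<^sub>R y) - closest_point K (x - (t*c) *\<^sub>R p) \<in> L"
        using iso unfolding isotone_projection_set_def by metis
      moreover have "closest_point K (x - (t*c) *\<^sub>R p) = x"
        using proj_fix[OF pc sd xK pK px] t c0 by simp
      ultimately have "q - x \<in> L" unfolding q_def by simp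
      then show ?thesis unfolding z_def using conicD[OF cL(3)] t by simp
    qed
    have pz: "inner p z \<ge> 0"
    proof -
      have "inner q p \<ge> 0" using pKd qK by blast
      then show ?thesis unfolding z_def using px t by (simp add: inner_diff_right inner_commute)
    qed
    have yz: "norm (y - z) \<le> norm (y - w)"
    proof -
      have "dist (x + t *\<^sub>R y) q \<le> dist (x + t *\<^sub>R y) (x + t *\<^sub>R w)"
        unfolding q_def by (rule closest_point_le[OF cK(1) t(2)])
      moreover have "x + t *\<^sub>R y - q = t *\<^sub>R (y - z)"
        unfolding z_def using t by (simp add: algebra_simps)
      moreover have "x + t *\<^sub>R y - (x + t *\<^sub>R w) = t *\<^sub>R (y - w)"
        by (simp add: algebra_simps)
      ultimately have "t * norm (y - z) \<le> t * norm (y - w)"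
        unfolding dist_norm using t by simp
      then show ?thesis using t by simp
    qed
    have yw: "norm (y - w) < M + \<delta>"
    proof -
      have "norm (y - w) \<le> norm (y - h) + norm (h - w)"
        using norm_triangle_ineq[of "y - h" "h - w"] by simp
      moreover have "norm (h - w) < \<delta>" using w(2) by (simp add: dist_norm norm_minus_commute)
      ultimately show ?thesis unfolding M_def by simp
    qed
    have ip: "inner (y - h) (h - z) \<ge> 0"
    proof -
      have "inner (y - h) (h - z) = a * inner p z"
        unfolding yh using ph by (simp add: inner_diff_right)
      then show ?thesis using a0 pz by simp
    qed
    have "inner (y - z) (y - z) = inner (y - h) (y - h) + 2 * inner (y - h) (h - z) + inner (h - z) (h - z)"
      using sq_add[of "y - h" "h - z"] by simp
    then have "norm (h - z)^2 \<le> norm (y - z)^2 - M^2"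
      using ip unfolding M_def power2_norm_eq_inner by linarith
    also have "\<dots> < (M + \<delta>)^2 - M^2"
    proof -
      have a1: "norm (y - z)^2 \<le> norm (y - w)^2" using yz by (intro power_mono) auto
      have a2: "norm (y - w)^2 < (M + \<delta>)^2" using yw by (intro power_strict_mono) auto
      from a1 a2 show ?thesis by linarith
    qed
    also have "\<dots> = 2*M*\<delta> + \<delta>^2" by (simp add: power2_eq_square algebra_simps)
    also have "\<dots> < \<epsilon>^2" by (rule key)
    finally have "norm (h - z)^2 < \<epsilon>^2" .
    then have "norm (h - z) < \<epsilon>" using ep by (smt (verit) power_mono norm_ge_zero)
    then show "\<exists>y\<in>L. dist y h < \<epsilon>" using zL by (auto simp: dist_norm norm_minus_commute)
  qed
  then have "h \<in> L" using cL(1) by (simp add: closure_closed)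
  then show ?thesis unfolding h_def .
qed



lemma int_exists:
  fixes K :: "'a::euclidean_space set"
  assumes pc: "proper_cone K"
  shows "\<exists>k0. k0 \<in> interior K \<and> k0 \<noteq> 0"
proof -
  have cK: "closed K" "convex K" "conic K" "0 \<in> K" using pc_facts(1-4)[OF pc] by auto
  have span: "span K = UNIV"
  proof -
    have "y \<in> span K" for y
    proof -
      obtain a b where "a \<in> K" "b \<in> K" "y = a - b" using pc_facts(6)[OF pc] by blast
      then show ?thesis by (simp add: span_diff span_base)
    qed
    then show ?thesis by auto
  qed
  have "0 \<in> affine hull K" using cK(4) by (rule hull_inc)
  then have "affine hull K = span K" by (rule affine_hull_span_0)
  then have "affine hull K = UNIV" using span by simp
  then have ri: "rel_interior K = interior K" by (rule rel_interior_interior)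
  have "K \<noteq> {}" using cK(4) by blast
  then have "rel_interior K \<noteq> {}" using rel_interior_eq_empty[OF cK(2)] by simp
  then obtain k0 where k0: "k0 \<in> interior K" using ri by auto
  have "k0 \<noteq> 0"
  proof
    assume "k0 = 0"
    then obtain e where e: "e > 0" "ball 0 e \<subseteq> K" using k0 mem_interior by blast
    obtain b :: 'a where b: "b \<in> Basis" using nonempty_Basis by blast
    have nb: "norm b = 1" using b by simp
    define v where "v = (e/2) *\<^sub>R b"
    have nv: "norm v = e/2" unfolding v_def using nb e by simp
    have "v \<in> ball 0 e" "-v \<in> ball 0 e" using e nv by auto
    then have "v \<in> K" "-v \<in> K" using e(2) by blast+
    then have "v = 0" by (rule pc_facts(5)[OF pc])
    then show False using nv e by simp
  qed
  then show ?thesis using k0 by blast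
qed

lemma exit_pt:
  fixes K :: "'a::euclidean_space set"
  assumes pc: "proper_cone K" and sd: "self_dual K" and k0: "k0 \<in> interior K"
    and d0: "d \<noteq> 0" and dk: "inner d k0 = 0"
  shows "\<exists>t>0. k0 + t *\<^sub>R d \<in> frontier K"
proof -
  have cK: "closed K" "convex K" "conic K" "0 \<in> K" using pc_facts(1-4)[OF pc] by auto
  obtain e where e: "e > 0" "ball k0 e \<subseteq> K" using k0 mem_interior by blast
  have nd: "norm d > 0" using d0 by simp
  define S where "S = {t. 0 \<le> t \<and> k0 + t *\<^sub>R d \<in> K}"
  define yv where "yv = k0 - (e/2/norm d) *\<^sub>R d"
  have "norm ((e/2/norm d) *\<^sub>R d) = e/2" using nd e by simp
  then have "dist k0 yv = e/2" unfolding yv_def dist_norm by simp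
  then have "yv \<in> ball k0 e" using e by simp
  then have yvK: "yv \<in> K" using e by blast
  have bnd: "t \<le> inner k0 k0 / ((e/2) * norm d)" if t: "t \<in> S" for t
  proof -
    have "k0 + t *\<^sub>R d \<in> K" using t unfolding S_def by auto
    then have i1: "inner yv (k0 + t *\<^sub>R d) \<ge> 0" using sd_mem[OF sd] yvK by blast
    have i2: "inner yv (k0 + t *\<^sub>R d) = inner k0 k0 - t * ((e/2/norm d) * inner d d)"
    proof -
      have "inner d k0 = inner k0 d" by (rule inner_commute)
      then show ?thesis unfolding yv_def using dk
        by (simp add: inner_diff_left inner_add_right algebra_simps)
    qed
    have i3: "(e/2/norm d) * inner d d = (e/2) * norm d"
      using nd by (simp add: power2_norm_eq_inner[symmetric] power2_eq_square)
    have i4: "t * ((e/2/norm d) * inner d d) \<le> inner k0 k0" using i1 i2 by linarith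
    have "t * ((e/2) * norm d) \<le> inner k0 k0" using i4 unfolding i3 .
    moreover have "(e/2) * norm d > 0" using e nd by simp
    ultimately show ?thesis by (simp add: pos_le_divide_eq)
  qed
  have cS: "closed S"
  proof -
    have "S = {0..} \<inter> (\<lambda>t. k0 + t *\<^sub>R d) -` K" unfolding S_def by auto
    moreover have "closed ((\<lambda>t. k0 + t *\<^sub>R d) -` K)"
      by (rule continuous_closed_vimage[OF cK(1)]) (intro continuous_intros)
    ultimately show ?thesis by (simp add: closed_Int)
  qed
  have "S \<subseteq> {0 .. inner k0 k0 / ((e/2) * norm d)}" using bnd unfolding S_def by auto
  then have "bounded S" using bounded_subset bounded_closed_interval by metis
  then have cpS: "compact S" using cS compact_eq_bounded_closed by blast
  define t1 where "t1 = e / (2 * norm d)"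
  have t1p: "t1 > 0" unfolding t1_def using e nd by simp
  have "t1 \<in> S"
  proof -
    have "norm (t1 *\<^sub>R d) = e/2" unfolding t1_def using nd e by simp
    then have "dist k0 (k0 + t1 *\<^sub>R d) = e/2" unfolding dist_norm by simp
    then have "k0 + t1 *\<^sub>R d \<in> ball k0 e" using e by simp
    then show ?thesis unfolding S_def using e t1p by auto
  qed
  then obtain T where T: "T \<in> S" "\<forall>s\<in>S. s \<le> T" using compact_attains_sup[OF cpS] by blast
  have Tp: "T > 0" using T \<open>t1 \<in> S\<close> t1p by fastforce
  have TK: "k0 + T *\<^sub>R d \<in> K" using T unfolding S_def by auto
  have "k0 + T *\<^sub>R d \<notin> interior K"
  proof
    assume "k0 + T *\<^sub>R d \<in> interior K"
    then obtain r where r: "r > 0" "ball (k0 + T *\<^sub>R d) r \<subseteq> K" using mem_interior by blast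
    define t2 where "t2 = T + r / (2 * norm d)"
    have "norm ((r / (2 * norm d)) *\<^sub>R d) = r/2" using nd r by simp
    moreover have "k0 + t2 *\<^sub>R d = (k0 + T *\<^sub>R d) + (r / (2 * norm d)) *\<^sub>R d"
      unfolding t2_def by (simp add: algebra_simps)
    ultimately have "dist (k0 + T *\<^sub>R d) (k0 + t2 *\<^sub>R d) = r/2" by (simp add: dist_norm)
    then have "k0 + t2 *\<^sub>R d \<in> ball (k0 + T *\<^sub>R d) r" using r by simp
    then have "k0 + t2 *\<^sub>R d \<in> K" using r(2) by blast
    moreover have "t2 \<ge> 0" "t2 > T" unfolding t2_def using Tp r nd by auto
    ultimately have "t2 \<in> S" unfolding S_def by auto
    then show False using T(2) \<open>t2 > T\<close> by fastforce
  qed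
  then have "k0 + T *\<^sub>R d \<in> frontier K" using TK closure_subset unfolding frontier_def by blast
  then show ?thesis using Tp by blast
qed



lemma minnorm:
  fixes K L :: "'a::euclidean_space set"
  assumes pc: "proper_cone K" and sd: "self_dual K" and sm: "smooth_cone K"
    and pL: "proper_cone L" and iso: "isotone_projection_set L K"
    and dim: "DIM('a) \<ge> 3"
    and k0: "k0 \<in> interior K" and k00: "k0 \<noteq> 0"
    and v0: "v \<noteq> 0" and vk: "inner v k0 = 0" and l: "l \<in> L" and vl: "inner v l > 0"
  shows "v \<in> L"
proof -
  have cL: "closed L" "convex L" "conic L" "0 \<in> L" using pc_facts(1-4)[OF pL] by auto
  define A where "A = L \<inter> {z. inner v z = inner v l}"
  have cA: "closed A" unfolding A_def using cL(1) closed_hyperplane by (rule closed_Int)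
  have lA: "l \<in> A" unfolding A_def using l by simp
  define z where "z = closest_point A 0"
  have zA: "z \<in> A" unfolding z_def using closest_point_in_set[OF cA] lA by blast
  have zL: "z \<in> L" and zv: "inner v z = inner v l" using zA unfolding A_def by auto
  have W: "inner w z = 0" if wf: "w \<in> frontier K" and w0: "w \<noteq> 0" and vw: "inner v w = 0" for w
  proof -
    define c where "c = inner w z / inner w w"
    define R where "R = z - c *\<^sub>R w"
    have ww: "inner w w > 0" using w0 by simp
    have RL: "R \<in> L" unfolding R_def c_def by (rule blowup[OF pc sd sm pL iso wf w0 zL])
    have "inner v R = inner v z" unfolding R_def using vw by (simp add: inner_diff_right)
    then have "R \<in> A" using RL zv unfolding A_def by simp
    then have "dist 0 z \<le> dist 0 R" unfolding z_def by (rule closest_point_le[OF cA])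
    then have "norm z \<le> norm R" by simp
    then have le: "inner z z \<le> inner R R" by (simp add: norm_le)
    have "inner R R = inner z z - 2 * c * inner w z + c * c * inner w w"
      unfolding R_def by (rule sq_exp)
    moreover have "c * inner w w = inner w z" unfolding c_def using ww by simp
    ultimately have "inner R R = inner z z - c * inner w z"
      by (simp add: algebra_simps)
    with le have "c * inner w z \<le> 0" by simp
    then have "inner w z * inner w z / inner w w \<le> 0" unfolding c_def by simp
    then have "inner w z * inner w z \<le> 0" using ww by (simp add: divide_le_0_iff)
    then show ?thesis by (simp add: mult_le_0_iff) (smt (verit) mult_le_0_iff zero_le_square)
  qed
  have KZ: "inner k0 z = 0 \<and> inner d z = 0" if d0: "d \<noteq> 0" and dk: "inner d k0 = 0" and vd: "inner v d = 0" for d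
  proof -
    obtain t1 where t1: "t1 > 0" "k0 + t1 *\<^sub>R d \<in> frontier K" using exit_pt[OF pc sd k0 d0 dk] by blast
    have md0: "-d \<noteq> 0" using d0 by simp
    have mdk: "inner (-d) k0 = 0" using dk by simp
    obtain t2 where t2: "t2 > 0" "k0 + t2 *\<^sub>R (-d) \<in> frontier K" using exit_pt[OF pc sd k0 md0 mdk] by blast
    have kk: "inner k0 k0 > 0" using k00 by simp
    have nz: "k0 + t *\<^sub>R d \<noteq> 0" for t
    proof
      assume "k0 + t *\<^sub>R d = 0"
      then have "inner (k0 + t *\<^sub>R d) k0 = 0" by simp
      moreover have "inner (k0 + t *\<^sub>R d) k0 = inner k0 k0" using dk by (simp add: inner_add_left)
      ultimately show False using kk by simp
    qed
    have vp: "inner v (k0 + t *\<^sub>R d) = 0" for t using vk vd by (simp add: inner_add_right)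
    have e1: "inner (k0 + t1 *\<^sub>R d) z = 0" using W[OF t1(2) nz vp] .
    have e2: "inner (k0 + t2 *\<^sub>R (-d)) z = 0"
      using W[OF t2(2)] nz[of "-t2"] vp[of "-t2"] by simp
    have f1: "inner k0 z + t1 * inner d z = 0" using e1 by (simp add: inner_add_left)
    have f2: "inner k0 z - t2 * inner d z = 0" using e2 by (simp add: inner_diff_left)
    have "(t1 + t2) * inner d z = 0" using f1 f2 by (simp add: algebra_simps)
    then have dz: "inner d z = 0" using t1 t2 by simp
    then show ?thesis using f1 by simp
  qed
  have "card {k0, v} \<le> 2" by (cases "k0 = v") auto
  moreover have "dim {k0, v} \<le> card {k0, v}"
    by (rule dim_le_card) (auto intro: span_base)
  ultimately have "dim {k0, v} \<le> 2" by simp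
  then have "dim {k0, v} < DIM('a)" using dim by simp
  then obtain e where e0: "e \<noteq> 0" and eo: "\<And>y. y \<in> span {k0, v} \<Longrightarrow> orthogonal e y"
    by (rule orthogonal_to_subspace_exists) blast
  have ek: "inner e k0 = 0" using eo[of k0] by (simp add: span_base orthogonal_def)
  have ve: "inner v e = 0" using eo[of v] by (simp add: span_base orthogonal_def inner_commute)
  have kz: "inner k0 z = 0" using KZ[OF e0 ek ve] by simp
  define c where "c = inner z v / inner v v"
  define zw where "zw = z - c *\<^sub>R v"
  have vv: "inner v v > 0" using v0 by simp
  have zwv: "inner v zw = 0" unfolding zw_def c_def using vv
    by (simp add: inner_diff_right inner_commute)
  have kv: "inner k0 v = 0" using vk by (simp add: inner_commute)
  have "inner k0 zw = 0" unfolding zw_def using kz kv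
    by (simp add: inner_diff_right)
  then have zwk: "inner zw k0 = 0" by (simp add: inner_commute)
  have "zw = 0"
  proof (rule ccontr)
    assume zw0: "zw \<noteq> 0"
    have "inner zw z = 0" using KZ[OF zw0 zwk zwv] by simp
    moreover have "inner zw zw = inner zw z - c * inner zw v"
    proof -
      have "inner zw zw = inner zw (z - c *\<^sub>R v)" by (simp add: zw_def)
      then show ?thesis by (simp add: inner_diff_right)
    qed
    moreover have "inner zw v = 0" using zwv by (simp add: inner_commute)
    ultimately have "inner zw zw = 0" by simp
    then show False using zw0 by simp
  qed
  then have zc: "z = c *\<^sub>R v" unfolding zw_def by simp
  have "c > 0" unfolding c_def using zv vl vv by (simp add: inner_commute)
  then have "(1/c) *\<^sub>R z \<in> L" using conicD[OF cL(3) zL] by simp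
  then show ?thesis using zc \<open>c > 0\<close> by simp
qed



theorem proposition1:
  fixes K :: "'a::euclidean_space set"
  assumes "DIM('a) \<ge> 3"
    and "proper_cone K" and "self_dual K" and "smooth_cone K" and "strictly_convex_cone K"
  shows "\<not> (\<exists>L::'a set. proper_cone L \<and> isotone_projection_set L K)"
proof
  assume "\<exists>L::'a set. proper_cone L \<and> isotone_projection_set L K"
  then obtain L :: "'a set" where pL: "proper_cone L" and iso: "isotone_projection_set L K" by blast
  note pc = assms(2) and sd = assms(3) and sm = assms(4) and dim = assms(1)
  obtain k0 where k0: "k0 \<in> interior K" and k00: "k0 \<noteq> 0" using int_exists[OF pc] by blast
  note MN = minnorm[OF pc sd sm pL iso dim k0 k00]
  have G: "g \<in> L \<or> -g \<in> L" if g0: "g \<noteq> 0" and gk: "inner g k0 = 0" for g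
  proof -
    obtain a b where ab: "a \<in> L" "b \<in> L" "g = a - b" using pc_facts(6)[OF pL] by blast
    have "inner g a - inner g b = inner g g" using ab(3) by (simp add: inner_diff_right)
    moreover have "inner g g > 0" using g0 by simp
    moreover have "inner (-g) b = - inner g b" by simp
    ultimately have "inner g a > 0 \<or> inner (-g) b > 0" by linarith
    then show ?thesis
    proof
      assume "inner g a > 0"
      then show ?thesis using MN[OF g0 gk ab(1)] by blast
    next
      assume "inner (-g) b > 0"
      moreover have "-g \<noteq> 0" using g0 by simp
      moreover have "inner (-g) k0 = 0" using gk by simp
      ultimately show ?thesis using MN[of "-g" b] ab(2) by blast
    qed
  qed
  have "dim {k0} < DIM('a)" using dim by simp
  then obtain e where e0: "e \<noteq> 0" and eo: "\<And>y. y \<in> span {k0} \<Longrightarrow> orthogonal e y"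
    by (rule orthogonal_to_subspace_exists) blast
  have ek: "inner e k0 = 0" using eo[of k0] by (simp add: span_base orthogonal_def)
  have "card {k0, e} \<le> 2" by (cases "k0 = e") auto
  moreover have "dim {k0, e} \<le> card {k0, e}"
    by (rule dim_le_card) (auto intro: span_base)
  ultimately have "dim {k0, e} < DIM('a)" using dim by simp
  then obtain f where f0: "f \<noteq> 0" and fo: "\<And>y. y \<in> span {k0, e} \<Longrightarrow> orthogonal f y"
    by (rule orthogonal_to_subspace_exists) blast
  have fk: "inner f k0 = 0" using fo[of k0] by (simp add: span_base orthogonal_def)
  have fe: "inner f e = 0" using fo[of e] by (simp add: span_base orthogonal_def)
  obtain e' where e': "e' \<in> L" "e' = e \<or> e' = -e"
    using G[OF e0 ek] by blast
  obtain f' where f': "f' \<in> L" "f' = f \<or> f' = -f"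
    using G[OF f0 fk] by blast
  have e'0: "e' \<noteq> 0" using e' e0 by auto
  have f'0: "f' \<noteq> 0" using f' f0 by auto
  have e'k: "inner e' k0 = 0" using e' ek by auto
  have f'k: "inner f' k0 = 0" using f' fk by auto
  have ef: "inner e' f' = 0"
  proof -
    have "inner e f = 0" using fe by (simp add: inner_commute)
    then show ?thesis using e'(2) f'(2) by auto
  qed
  define v where "v = e' - f'"
  have vk: "inner v k0 = 0" unfolding v_def using e'k f'k by (simp add: inner_diff_left)
  have fe': "inner f' e' = 0" using ef by (simp add: inner_commute)
  have ve: "inner v e' = inner e' e'" unfolding v_def using fe' by (simp add: inner_diff_left)
  have vf: "inner (-v) f' = inner f' f'" unfolding v_def using ef by (simp add: inner_diff_left)
  have ee: "inner e' e' > 0" using e'0 by simp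
  have ff: "inner f' f' > 0" using f'0 by simp
  have v0: "v \<noteq> 0" using ve ee by auto
  have "v \<in> L" using MN[OF v0 vk e'(1)] ve ee by simp
  moreover have "-v \<in> L"
  proof -
    have "-v \<noteq> 0" "inner (-v) k0 = 0" "inner (-v) f' > 0" using v0 vk vf ff by auto
    then show ?thesis using MN[of "-v" f'] f'(1) by blast
  qed
  ultimately have "v = 0" by (rule pc_facts(5)[OF pL])
  then show False using v0 by simp
qed

end
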